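(* Let $N\ge1$ and consider the MT process with modified absorption time $\tau^*$ and transient set $S^*$ as in the context. The quasi-stationary distribution $\nu^*$ (the unique QSD charging $(N,1)$, which is also the limit $\lim_{t\to\infty}P_{(N,1)}((X_t,Y_t)=(x,y)\mid\tau^*>t)$) is given by $$\nu^*(x,y)=\begin{cases} C_N^{-1} & (x,y)=(N,1),\\[2pt] C_N^{-1}\dfrac{\lambda_0}{\lambda_1-\lambda_0} & (x,y)=(N-1,2),\\[2pt] C_N^{-1}\displaystyle\sum_{\gamma\in\Gamma_{(x,y)}}\frac{\lambda_0}{\lambda_L-\lambda_0}\prod_{j=1}^{L-1}\frac{\rho_j}{\lambda_j-\lambda_0} & \text{otherwise},\end{cases}$$ where, for a path $\gamma=(v_0,\dots,v_L)\in\Gamma_{(x,y)}$ with $v_j=(x_j,y_j)$, $\lambda_0=\rho_0=N$, $\lambda_j=Ny_j$, and $\rho_j=x_jy_j$ if $v_{j+1}-v_j=(-1,1)$, $\rho_j=y_j(N-x_j)$ if $v_{j+1}-v_j=(0,-1)$; here $L=2N-2x-y+1$ (so $\lambda_L=Ny$), and $C_N$ is the normalizing constant making $\sum_{(x,y)\in S^*}\nu^*(x,y)=1$.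
   Context: MT model: population of size $N+1$; $X_t$, $Y_t$ are the numbers of ignorants and spreaders; continuous-time Markov chain on $\{(x,y)\in\mathbb{Z}^2:0\le x\le N,\,0\le y\le N+1-x\}$ with transitions $(X,Y)\to(X-1,Y+1)$ at rate $XY$ and $(X,Y)\to(X,Y-1)$ at rate $Y(N-X)$ (total rate $NY$). Modified transient set $S^*=\{(N,1)\}\cup\{(x,y)\in\mathbb{Z}^2:0\le x\le N,\ 2\le y\le N+1-x\}$; modified absorption time $\tau^*=\inf\{t>0: Y_t\le1,\ X_t\le N-1\}$ (the process is killed upon first return to level $y=1$ after leaving $(N,1)$). A QSD is a probability measure $\nu$ on $S^*$ with $P_\nu((X_t,Y_t)\in A\mid\tau^*>t)=\nu(A)$ for all $t\ge0$, $A\subset S^*$. Paths: with $\mathcal{E}=\{(-1,1),(0,-1)\}$, $\Gamma_{(x,y)}$ is the set of sequences $v_0=(N,1),v_1,\dots,v_L=(x,y)$ of states all lying in $S^*$ with $v_{j+1}-v_j\in\mathcal{E}$ for every $j$; each such path has $N-x$ steps $(-1,1)$ and $N+1-x-y$ steps $(0,-1)$, hence length $L=2N-2x-y+1$. *)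

theory Defs
  imports Complex_Main
begin

text \<open>States are pairs (x,y) of integers: x = number of ignorants, y = number of spreaders.
  Population size N+1.\<close>

definition Sstar :: "nat \<Rightarrow> (int \<times> int) set" where
  "Sstar N = {(int N, 1)} \<union> {(x, y). 0 \<le> x \<and> x \<le> int N \<and> 2 \<le> y \<and> y \<le> int N + 1 - x}"

definition mt_rate :: "nat \<Rightarrow> int \<times> int \<Rightarrow> int \<times> int \<Rightarrow> real" where
  "mt_rate N a b =
     (if b = (fst a - 1, snd a + 1) then real_of_int (fst a * snd a)
      else if b = (fst a, snd a - 1) then real_of_int (snd a * (int N - fst a))
      else 0)"

text \<open>Sub-generator of the chain killed at time tau* (generator restricted to S*);
  the total jump rate out of (x,y) is N y.\<close>
definition Qsub :: "nat \<Rightarrow> int \<times> int \<Rightarrow> int \<times> int \<Rightarrow> real" where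
  "Qsub N a b = (if a = b then - (real N * real_of_int (snd a)) else mt_rate N a b)"

fun Qpow :: "nat \<Rightarrow> nat \<Rightarrow> int \<times> int \<Rightarrow> int \<times> int \<Rightarrow> real" where
  "Qpow N 0 a b = (if a = b then 1 else 0)"
| "Qpow N (Suc k) a b = (\<Sum>c\<in>Sstar N. Qpow N k a c * Qsub N c b)"

text \<open>Ptrans N t a b = P_a((X_t,Y_t) = b, tau* > t) for a, b in S*, i.e. the (a,b) entry of
  the matrix exponential exp(t Q_{S*}) (Kolmogorov semigroup of the killed finite chain).\<close>
definition Ptrans :: "nat \<Rightarrow> real \<Rightarrow> int \<times> int \<Rightarrow> int \<times> int \<Rightarrow> real" where
  "Ptrans N t a b = (\<Sum>k. t ^ k / fact k * Qpow N k a b)"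

definition is_prob_on :: "'a set \<Rightarrow> ('a \<Rightarrow> real) \<Rightarrow> bool" where
  "is_prob_on S \<nu> = ((\<forall>s\<in>S. 0 \<le> \<nu> s) \<and> (\<Sum>s\<in>S. \<nu> s) = 1)"

definition is_QSD :: "nat \<Rightarrow> (int \<times> int \<Rightarrow> real) \<Rightarrow> bool" where
  "is_QSD N \<nu> = (is_prob_on (Sstar N) \<nu> \<and>
     (\<forall>t\<ge>0. \<forall>A\<subseteq>Sstar N.
        (\<Sum>b\<in>A. \<Sum>a\<in>Sstar N. \<nu> a * Ptrans N t a b)
          / (\<Sum>b\<in>Sstar N. \<Sum>a\<in>Sstar N. \<nu> a * Ptrans N t a b)
        = (\<Sum>b\<in>A. \<nu> b)))"

definition mt_step :: "int \<times> int \<Rightarrow> int \<times> int \<Rightarrow> bool" where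
  "mt_step v w = (w = (fst v - 1, snd v + 1) \<or> w = (fst v, snd v - 1))"

definition Gamma :: "nat \<Rightarrow> int \<times> int \<Rightarrow> (int \<times> int) list set" where
  "Gamma N v = {vs. vs \<noteq> [] \<and> hd vs = (int N, 1) \<and> last vs = v \<and> set vs \<subseteq> Sstar N \<and>
       (\<forall>j. Suc j < length vs \<longrightarrow> mt_step (vs ! j) (vs ! Suc j))}"

definition path_lam :: "nat \<Rightarrow> (int \<times> int) list \<Rightarrow> nat \<Rightarrow> real" where
  "path_lam N vs j = (if j = 0 then real N else real N * real_of_int (snd (vs ! j)))"

definition path_rho :: "nat \<Rightarrow> (int \<times> int) list \<Rightarrow> nat \<Rightarrow> real" where
  "path_rho N vs j =
     (if j = 0 then real N
      else if vs ! Suc j = (fst (vs ! j) - 1, snd (vs ! j) + 1)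
      then real_of_int (fst (vs ! j) * snd (vs ! j))
      else real_of_int (snd (vs ! j) * (int N - fst (vs ! j))))"

definition path_weight :: "nat \<Rightarrow> (int \<times> int) list \<Rightarrow> real" where
  "path_weight N vs =
     (let L = length vs - 1 in
      path_lam N vs 0 / (path_lam N vs L - path_lam N vs 0)
      * (\<Prod>j\<in>{1..<L}. path_rho N vs j / (path_lam N vs j - path_lam N vs 0)))"

definition nu_unnorm :: "nat \<Rightarrow> int \<times> int \<Rightarrow> real" where
  "nu_unnorm N v =
     (if v = (int N, 1) then 1
      else if v = (int N - 1, 2) then real N / (2 * real N - real N)
      else (\<Sum>\<gamma>\<in>Gamma N v. path_weight N \<gamma>))"

definition C_N :: "nat \<Rightarrow> real" where
  "C_N N = (\<Sum>v\<in>Sstar N. nu_unnorm N v)"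

definition nu_star :: "nat \<Rightarrow> int \<times> int \<Rightarrow> real" where
  "nu_star N v = nu_unnorm N v / C_N N"

end

theory Submission
  imports Defs
begin

definition p1 :: "int \<times> int \<Rightarrow> int \<times> int" where "p1 b = (fst b + 1, snd b - 1)"
definition p2 :: "int \<times> int \<Rightarrow> int \<times> int" where "p2 b = (fst b, snd b + 1)"
definition r1 :: "int \<times> int \<Rightarrow> real" where "r1 b = real_of_int ((fst b + 1) * (snd b - 1))"
definition r2 :: "nat \<Rightarrow> int \<times> int \<Rightarrow> real" where "r2 N b = real_of_int ((snd b + 1) * (int N - fst b))"
definition pot :: "int \<times> int \<Rightarrow> int" where "pot b = 2 * fst b + snd b"

lemma finite_Sstar: "finite (Sstar N)"
proof -
  have "Sstar N \<subseteq> {0..int N} \<times> {0..int N + 1}" unfolding Sstar_def by auto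
  thus ?thesis by (rule finite_subset) auto
qed

lemma Qsub_expand: "Qsub N a b = (if a = b then - (real N * real_of_int (snd b)) else if a = p1 b then r1 b
   else if a = p2 b then r2 N b else 0)"
  by (cases a; cases b) (auto simp: Qsub_def mt_rate_def p1_def p2_def r1_def r2_def)

lemma sumQ:
  assumes "b \<in> Sstar N"
  shows "(\<Sum>a\<in>Sstar N. f a * Qsub N a b) = - (real N * real_of_int (snd b)) * f b
     + (if p1 b \<in> Sstar N then f (p1 b) * r1 b else 0) + (if p2 b \<in> Sstar N then f (p2 b) * r2 N b else 0)"
proof -
  have d: "p1 b \<noteq> b" "p2 b \<noteq> b" "p1 b \<noteq> p2 b" by (auto simp: p1_def p2_def prod_eq_iff)
  have "(\<Sum>a\<in>Sstar N. f a * Qsub N a b) = (\<Sum>a\<in>Sstar N. (if a = b then - (real N * real_of_int (snd b)) * f a else 0)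
     + (if a = p1 b then f a * r1 b else 0) + (if a = p2 b then f a * r2 N b else 0))"
    by (rule sum.cong) (use d in \<open>auto simp: Qsub_expand\<close>)
  also have "\<dots> = - (real N * real_of_int (snd b)) * f b
     + (if p1 b \<in> Sstar N then f (p1 b) * r1 b else 0) + (if p2 b \<in> Sstar N then f (p2 b) * r2 N b else 0)" by (simp add: sum.distrib finite_Sstar assms)
  finally show ?thesis .
qed

lemma Sstar_pot: "b \<in> Sstar N \<Longrightarrow> pot b \<le> 2 * int N + 1 \<and> (pot b = 2 * int N + 1 \<longleftrightarrow> b = (int N, 1))"
  by (auto simp: Sstar_def pot_def)

lemma Sstar_y: "b \<in> Sstar N \<Longrightarrow> b \<noteq> (int N, 1) \<Longrightarrow> 2 \<le> snd b \<and> 0 \<le> fst b \<and> fst b \<le> int N"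
  by (auto simp: Sstar_def)

lemma pot_p: "pot (p1 b) = pot b + 1" "pot (p2 b) = pot b + 1"
  by (auto simp: pot_def p1_def p2_def)

lemma pot_induct:
  assumes "\<And>b. b \<in> Sstar N \<Longrightarrow> (\<And>a. a \<in> Sstar N \<Longrightarrow> pot a > pot b \<Longrightarrow> P a) \<Longrightarrow> P b"
  shows "b \<in> Sstar N \<Longrightarrow> P b"
proof (induction "nat (2 * int N + 1 - pot b)" arbitrary: b rule: less_induct)
  case less
  show ?case
  proof (rule assms[OF less(2)])
    fix a assume a: "a \<in> Sstar N" "pot b < pot a"
    have "pot a \<le> 2 * int N + 1" using Sstar_pot[OF a(1)] by auto
    hence "nat (2 * int N + 1 - pot a) < nat (2 * int N + 1 - pot b)" using a(2) by auto
    thus "P a" using less(1) a(1) by blast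
  qed
qed

lemma r_nonneg: "b \<in> Sstar N \<Longrightarrow> b \<noteq> (int N, 1) \<Longrightarrow> 0 \<le> r1 b \<and> 0 \<le> r2 N b"
  by (auto simp: r1_def r2_def dest!: Sstar_y)

lemma p_NS: "p1 (int N, 1) \<notin> Sstar N" "p2 (int N, 1) \<notin> Sstar N"
  by (auto simp: p1_def p2_def Sstar_def)

lemma mt_step_pot: "mt_step v w \<Longrightarrow> pot w = pot v - 1"
  by (auto simp: mt_step_def pot_def)

lemma Gamma_pot:
  assumes "\<gamma> \<in> Gamma N v" "j < length \<gamma>"
  shows "pot (\<gamma> ! j) = 2 * int N + 1 - int j"
  using assms(2)
proof (induction j)
  case 0
  have "\<gamma> ! 0 = (int N, 1)" using assms(1) by (auto simp: Gamma_def hd_conv_nth)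
  thus ?case by (simp add: pot_def)
next
  case (Suc j)
  have "mt_step (\<gamma> ! j) (\<gamma> ! Suc j)" using assms(1) Suc(2) by (auto simp: Gamma_def)
  thus ?case using Suc mt_step_pot by fastforce
qed

lemma Sstar_pot_pos: "b \<in> Sstar N \<Longrightarrow> 1 \<le> pot b"
  by (auto simp: Sstar_def pot_def)

lemma Gamma_len:
  assumes "\<gamma> \<in> Gamma N v"
  shows "length \<gamma> \<le> 2 * N + 1" "int (length \<gamma>) = 2 * int N + 2 - pot v"
proof -
  have ne: "\<gamma> \<noteq> []" and sub: "set \<gamma> \<subseteq> Sstar N" and l: "last \<gamma> = v" using assms by (auto simp: Gamma_def)
  have lv: "\<gamma> ! (length \<gamma> - 1) = v" using ne l by (simp add: last_conv_nth)
  have "\<gamma> ! (length \<gamma> - 1) \<in> Sstar N" using sub ne by (meson diff_less length_greater_0_conv less_one nth_mem subsetD)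
  hence "1 \<le> pot (\<gamma> ! (length \<gamma> - 1))" by (rule Sstar_pot_pos)
  moreover have "pot (\<gamma> ! (length \<gamma> - 1)) = 2 * int N + 1 - int (length \<gamma> - 1)"
    using Gamma_pot[OF assms, of "length \<gamma> - 1"] ne by simp
  ultimately show "length \<gamma> \<le> 2 * N + 1" "int (length \<gamma>) = 2 * int N + 2 - pot v"
    using ne lv by (auto simp: of_nat_diff Suc_le_eq)
qed

lemma finite_Gamma: "finite (Gamma N v)"
proof -
  have "Gamma N v \<subseteq> {xs. set xs \<subseteq> Sstar N \<and> length xs \<le> 2 * N + 1}"
    using Gamma_len(1) by (auto simp: Gamma_def)
  thus ?thesis by (rule finite_subset) (rule finite_lists_length_le[OF finite_Sstar])
qed

lemma Gamma_notS: "v \<notin> Sstar N \<Longrightarrow> Gamma N v = {}"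
  by (auto simp: Gamma_def) (metis last_in_set subsetD)

lemma Gamma_len2: "\<gamma> \<in> Gamma N v \<Longrightarrow> v \<noteq> (int N, 1) \<Longrightarrow> 2 \<le> length \<gamma>"
  by (cases \<gamma>) (auto simp: Gamma_def Suc_le_eq split: if_splits)

lemma Gamma_snoc:
  assumes "\<gamma> \<in> Gamma N a" "a = p1 b \<or> a = p2 b" "b \<in> Sstar N"
  shows "\<gamma> @ [b] \<in> Gamma N b"
proof -
  have ne: "\<gamma> \<noteq> []" and l: "last \<gamma> = a" using assms(1) by (auto simp: Gamma_def)
  have st: "mt_step a b" using assms(2) by (auto simp: mt_step_def p1_def p2_def)
  have "mt_step ((\<gamma> @ [b]) ! j) ((\<gamma> @ [b]) ! Suc j)" if "Suc j < length (\<gamma> @ [b])" for j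
  proof (cases "Suc j < length \<gamma>")
    case True
    thus ?thesis using assms(1) by (auto simp: Gamma_def nth_append)
  next
    case False
    hence "j = length \<gamma> - 1" "Suc j = length \<gamma>" using that by auto
    thus ?thesis using st l ne by (simp add: nth_append last_conv_nth)
  qed
  thus ?thesis using assms(1,3) ne by (auto simp: Gamma_def)
qed

lemma Gamma_decomp:
  assumes "b \<in> Sstar N" "b \<noteq> (int N, 1)"
  shows "Gamma N b = (\<lambda>\<gamma>. \<gamma> @ [b]) ` (Gamma N (p1 b) \<union> Gamma N (p2 b))"
proof
  show "(\<lambda>\<gamma>. \<gamma> @ [b]) ` (Gamma N (p1 b) \<union> Gamma N (p2 b)) \<subseteq> Gamma N b"
    using Gamma_snoc assms(1) by blast
  show "Gamma N b \<subseteq> (\<lambda>\<gamma>. \<gamma> @ [b]) ` (Gamma N (p1 b) \<union> Gamma N (p2 b))"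
  proof
    fix \<gamma> assume g: "\<gamma> \<in> Gamma N b"
    have len: "2 \<le> length \<gamma>" using Gamma_len2[OF g assms(2)] .
    define \<delta> where "\<delta> = butlast \<gamma>"
    have ge: "\<gamma> = \<delta> @ [b]" using g by (auto simp: Gamma_def \<delta>_def)
    have ld: "length \<delta> = length \<gamma> - 1" by (simp add: \<delta>_def)
    have dne: "\<delta> \<noteq> []" using len ld by auto
    have steps: "\<forall>j. Suc j < length \<gamma> \<longrightarrow> mt_step (\<gamma> ! j) (\<gamma> ! Suc j)" using g by (auto simp: Gamma_def)
    have "mt_step (last \<delta>) b"
    proof -
      have "mt_step (\<gamma> ! (length \<delta> - 1)) (\<gamma> ! Suc (length \<delta> - 1))" using steps len ld by auto
      moreover have "\<gamma> ! (length \<delta> - 1) = last \<delta>" using dne ge by (simp add: nth_append last_conv_nth)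
      moreover have "\<gamma> ! Suc (length \<delta> - 1) = b" using dne ge by (simp add: nth_append)
      ultimately show ?thesis by simp
    qed
    hence lp: "last \<delta> = p1 b \<or> last \<delta> = p2 b" by (auto simp: mt_step_def p1_def p2_def)
    have "\<delta> \<in> Gamma N (last \<delta>)"
    proof -
      have "hd \<delta> = (int N, 1)" using g dne ge by (auto simp: Gamma_def)
      moreover have "set \<delta> \<subseteq> Sstar N" using g ge by (auto simp: Gamma_def)
      moreover have "\<forall>j. Suc j < length \<delta> \<longrightarrow> mt_step (\<delta> ! j) (\<delta> ! Suc j)"
      proof (intro allI impI)
        fix j assume "Suc j < length \<delta>"
        thus "mt_step (\<delta> ! j) (\<delta> ! Suc j)" using steps[rule_format, of j] ge by (simp add: nth_append)
      qed
      ultimately show ?thesis using dne by (simp add: Gamma_def)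
    qed
    thus "\<gamma> \<in> (\<lambda>\<gamma>. \<gamma> @ [b]) ` (Gamma N (p1 b) \<union> Gamma N (p2 b))" using ge lp by auto
  qed
qed

lemma pw_snoc:
  assumes len: "2 \<le> length \<gamma>"
  shows "path_weight N (\<gamma> @ [b]) = path_weight N \<gamma> *
    (if b = (fst (last \<gamma>) - 1, snd (last \<gamma>) + 1) then real_of_int (fst (last \<gamma>) * snd (last \<gamma>))
     else real_of_int (snd (last \<gamma>) * (int N - fst (last \<gamma>)))) / (real N * real_of_int (snd b) - real N)"
proof -
  define L where "L = length \<gamma> - 1"
  have L1: "1 \<le> L" and Lg: "L < length \<gamma>" using len by (auto simp: L_def)
  have lastL: "\<gamma> ! L = last \<gamma>" using len unfolding L_def by (subst last_conv_nth) auto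
  have lamL: "path_lam N (\<gamma> @ [b]) j = path_lam N \<gamma> j" if "j \<le> L" for j
    using that Lg by (auto simp: path_lam_def nth_append)
  have rhoL: "path_rho N (\<gamma> @ [b]) j = path_rho N \<gamma> j" if "j < L" for j
    using that Lg by (auto simp: path_rho_def nth_append L_def)
  have rhoLast: "path_rho N (\<gamma> @ [b]) L = (if b = (fst (last \<gamma>) - 1, snd (last \<gamma>) + 1) then real_of_int (fst (last \<gamma>) * snd (last \<gamma>))
     else real_of_int (snd (last \<gamma>) * (int N - fst (last \<gamma>))))"
  proof -
    have "(\<gamma> @ [b]) ! L = last \<gamma>" using Lg lastL by (simp add: nth_append)
    moreover have "Suc L = length \<gamma>" using len by (simp add: L_def)
    hence "(\<gamma> @ [b]) ! Suc L = b" by simp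
    moreover have "path_rho N (\<gamma> @ [b]) L = (if (\<gamma> @ [b]) ! Suc L = (fst ((\<gamma> @ [b]) ! L) - 1, snd ((\<gamma> @ [b]) ! L) + 1)
      then real_of_int (fst ((\<gamma> @ [b]) ! L) * snd ((\<gamma> @ [b]) ! L))
      else real_of_int (snd ((\<gamma> @ [b]) ! L) * (int N - fst ((\<gamma> @ [b]) ! L))))"
      using L1 unfolding path_rho_def by simp
    ultimately show ?thesis by (simp only:)
  qed
  have lamLast: "path_lam N (\<gamma> @ [b]) (Suc L) = real N * real_of_int (snd b)"
  proof -
    have "Suc L = length \<gamma>" using len by (simp add: L_def)
    thus ?thesis by (auto simp add: path_lam_def)
  qed
  have len': "length (\<gamma> @ [b]) - 1 = Suc L" using len by (simp add: L_def)
  have prodeq: "(\<Prod>j\<in>{1..<L}. path_rho N (\<gamma> @ [b]) j / (path_lam N (\<gamma> @ [b]) j - path_lam N (\<gamma> @ [b]) 0))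
     = (\<Prod>j\<in>{1..<L}. path_rho N \<gamma> j / (path_lam N \<gamma> j - path_lam N \<gamma> 0))"
    by (rule prod.cong) (auto simp: lamL rhoL)
  have prodeq2: "(\<Prod>j\<in>{Suc 0..<L}. path_rho N (\<gamma> @ [b]) j / (path_lam N \<gamma> j - path_lam N \<gamma> 0))
     = (\<Prod>j\<in>{Suc 0..<L}. path_rho N \<gamma> j / (path_lam N \<gamma> j - path_lam N \<gamma> 0))"
    by (rule prod.cong) (auto simp: rhoL)
  have "path_weight N (\<gamma> @ [b]) = path_lam N \<gamma> 0 / (real N * real_of_int (snd b) - path_lam N \<gamma> 0)
      * ((\<Prod>j\<in>{1..<L}. path_rho N \<gamma> j / (path_lam N \<gamma> j - path_lam N \<gamma> 0))
         * (path_rho N (\<gamma> @ [b]) L / (path_lam N \<gamma> L - path_lam N \<gamma> 0)))"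
    unfolding path_weight_def Let_def len' using L1
    by (simp add: prod.atLeastLessThan_Suc prodeq prodeq2 lamL lamLast del: prod.op_ivl_Suc)
  also have "\<dots> = path_weight N \<gamma> * path_rho N (\<gamma> @ [b]) L / (real N * real_of_int (snd b) - real N)"
    unfolding path_weight_def Let_def L_def[symmetric] by (simp add: path_lam_def mult.commute mult.left_commute)
  finally show ?thesis by (simp add: rhoLast)
qed

definition Gsum :: "nat \<Rightarrow> int \<times> int \<Rightarrow> real" where
  "Gsum N v = (\<Sum>\<gamma>\<in>Gamma N v. path_weight N \<gamma>)"

lemma Gamma_N12:
  assumes "1 \<le> N"
  shows "Gamma N (int N - 1, 2) = {[(int N, 1), (int N - 1, 2)]}"
proof
  show "{[(int N, 1), (int N - 1, 2)]} \<subseteq> Gamma N (int N - 1, 2)"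
    using assms by (auto simp: Gamma_def Sstar_def mt_step_def less_Suc_eq)
  show "Gamma N (int N - 1, 2) \<subseteq> {[(int N, 1), (int N - 1, 2)]}"
  proof
    fix \<gamma> assume g: "\<gamma> \<in> Gamma N (int N - 1, 2)"
    have "int (length \<gamma>) = 2" using Gamma_len(2)[OF g] by (simp add: pot_def)
    hence l2: "length \<gamma> = 2" by simp
    then obtain u w where "\<gamma> = [u, w]"
      by (metis (no_types, opaque_lifting) One_nat_def Suc_1 length_0_conv length_Suc_conv)
    thus "\<gamma> \<in> {[(int N, 1), (int N - 1, 2)]}" using g by (auto simp: Gamma_def)
  qed
qed

lemma Gsum_N12: "1 \<le> N \<Longrightarrow> Gsum N (int N - 1, 2) = 1"
  by (simp add: Gsum_def Gamma_N12 path_weight_def path_lam_def)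

lemma nu_Gsum: "1 \<le> N \<Longrightarrow> v \<noteq> (int N, 1) \<Longrightarrow> nu_unnorm N v = Gsum N v"
  by (auto simp: nu_unnorm_def Gsum_N12 Gsum_def[symmetric])

lemma nu_notS: "1 \<le> N \<Longrightarrow> v \<notin> Sstar N \<Longrightarrow> nu_unnorm N v = 0"
proof -
  assume N: "1 \<le> N" and v: "v \<notin> Sstar N"
  have "v \<noteq> (int N, 1)" using v by (auto simp: Sstar_def)
  thus ?thesis using nu_Gsum[OF N] v by (simp add: Gsum_def Gamma_notS)
qed

lemma Gsum_snoc:
  assumes N: "1 \<le> N" and b: "b \<in> Sstar N" and a: "a = p1 b \<or> a = p2 b" and aN: "a \<noteq> (int N, 1)"
  shows "(\<Sum>\<gamma>\<in>Gamma N a. path_weight N (\<gamma> @ [b])) = Gsum N a *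
     (if a = p1 b then r1 b else r2 N b) / (real N * real_of_int (snd b) - real N)"
proof -
  have "(\<Sum>\<gamma>\<in>Gamma N a. path_weight N (\<gamma> @ [b])) = (\<Sum>\<gamma>\<in>Gamma N a. path_weight N \<gamma> *
     (if a = p1 b then r1 b else r2 N b) / (real N * real_of_int (snd b) - real N))"
  proof (rule sum.cong)
    fix \<gamma> assume g: "\<gamma> \<in> Gamma N a"
    have l: "last \<gamma> = a" using g by (simp add: Gamma_def)
    show "path_weight N (\<gamma> @ [b]) = path_weight N \<gamma> * (if a = p1 b then r1 b else r2 N b) / (real N * real_of_int (snd b) - real N)"
      unfolding pw_snoc[OF Gamma_len2[OF g aN]] l using a
      by (auto simp: p1_def p2_def r1_def r2_def prod_eq_iff)
  qed simp
  also have "\<dots> = Gsum N a * (if a = p1 b then r1 b else r2 N b) / (real N * real_of_int (snd b) - real N)"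
    by (simp add: Gsum_def sum_divide_distrib sum_distrib_right)
  finally show ?thesis .
qed

lemma nu_rec:
  assumes N: "1 \<le> N" and b: "b \<in> Sstar N" "b \<noteq> (int N, 1)"
  shows "nu_unnorm N b * (real N * real_of_int (snd b) - real N) = nu_unnorm N (p1 b) * r1 b + nu_unnorm N (p2 b) * r2 N b"
proof (cases "b = (int N - 1, 2)")
  case True
  have "p2 b \<notin> Sstar N" using True by (auto simp: p2_def Sstar_def)
  hence z: "nu_unnorm N (p2 b) = 0" using nu_notS[OF N] by blast
  have o1: "nu_unnorm N (p1 b) = 1" using True by (simp add: nu_unnorm_def p1_def)
  have o2: "nu_unnorm N b = 1" using True N by (simp add: nu_unnorm_def)
  show ?thesis unfolding z o1 o2 using True by (simp add: r1_def p1_def)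
next
  case False
  have y2: "2 \<le> snd b" using Sstar_y[OF b] by simp
  have D: "real N * real_of_int (snd b) - real N \<noteq> 0"
  proof -
    have "real N * real_of_int (snd b) - real N = real N * (real_of_int (snd b) - 1)" by (simp add: algebra_simps)
    moreover have "real_of_int (snd b) - 1 > 0" using y2 by simp
    ultimately show ?thesis using N by simp
  qed
  have a1: "p1 b \<noteq> (int N, 1)" using False by (auto simp: p1_def prod_eq_iff)
  have a2: "p2 b \<noteq> (int N, 1)" using b by (auto simp: p2_def Sstar_def)
  have d: "p1 b \<noteq> p2 b" by (auto simp: p1_def p2_def prod_eq_iff)
  have "nu_unnorm N b = Gsum N b" using nu_Gsum[OF N b(2)] .
  also have "\<dots> = (\<Sum>\<gamma>\<in>Gamma N (p1 b) \<union> Gamma N (p2 b). path_weight N (\<gamma> @ [b]))"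
    unfolding Gsum_def Gamma_decomp[OF b] by (subst sum.reindex) (auto simp: inj_on_def)
  also have "\<dots> = (\<Sum>\<gamma>\<in>Gamma N (p1 b). path_weight N (\<gamma> @ [b])) + (\<Sum>\<gamma>\<in>Gamma N (p2 b). path_weight N (\<gamma> @ [b]))"
    by (rule sum.union_disjoint) (use d finite_Gamma in \<open>auto simp: Gamma_def\<close>)
  also have "\<dots> = Gsum N (p1 b) * r1 b / (real N * real_of_int (snd b) - real N)
      + Gsum N (p2 b) * r2 N b / (real N * real_of_int (snd b) - real N)"
    using Gsum_snoc[OF N b(1) _ a1] Gsum_snoc[OF N b(1) _ a2] d by simp
  also have "\<dots> = (Gsum N (p1 b) * r1 b + Gsum N (p2 b) * r2 N b) / (real N * real_of_int (snd b) - real N)"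
    by (simp add: add_divide_distrib)
  finally show ?thesis using D nu_Gsum[OF N a1] nu_Gsum[OF N a2] by simp
qed

lemma nu_nonneg:
  assumes N: "1 \<le> N"
  shows "b \<in> Sstar N \<Longrightarrow> 0 \<le> nu_unnorm N b"
proof (rule pot_induct[where N=N and P="\<lambda>b. 0 \<le> nu_unnorm N b"])
  fix b assume hb: "b \<in> Sstar N" and IH: "\<And>a. a \<in> Sstar N \<Longrightarrow> pot a > pot b \<Longrightarrow> 0 \<le> nu_unnorm N a"
  show "0 \<le> nu_unnorm N b"
  proof (cases "b = (int N, 1)")
    case True thus ?thesis by (simp add: nu_unnorm_def)
  next
    case False
    have y2: "2 \<le> snd b" using Sstar_y[OF hb False] by simp
    have nn: "0 \<le> nu_unnorm N a" if "a = p1 b \<or> a = p2 b" for a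
    proof (cases "a \<in> Sstar N")
      case True
      have "pot a > pot b" using that pot_p[of b] by auto
      thus ?thesis using IH True by blast
    next
      case False thus ?thesis using nu_notS[OF N] by simp
    qed
    have "0 \<le> nu_unnorm N (p1 b) * r1 b + nu_unnorm N (p2 b) * r2 N b"
      using nn[of "p1 b"] nn[of "p2 b"] r_nonneg[OF hb False] by simp
    hence "0 \<le> nu_unnorm N b * (real N * real_of_int (snd b) - real N)" using nu_rec[OF N hb False] by simp
    moreover have "real N * real_of_int (snd b) - real N > 0"
    proof -
      have "real N * real_of_int (snd b) - real N = real N * (real_of_int (snd b) - 1)" by (simp add: algebra_simps)
      moreover have "real_of_int (snd b) - 1 > 0" using y2 by simp
      ultimately show ?thesis using N by simp
    qed
    ultimately show ?thesis by (simp add: zero_le_mult_iff)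
  qed
qed assumption

definition Mb :: "nat \<Rightarrow> real" where
  "Mb N = (\<Sum>c\<in>Sstar N. real N * \<bar>real_of_int (snd c)\<bar> + \<bar>real_of_int (fst c * snd c)\<bar>
      + \<bar>real_of_int (snd c * (int N - fst c))\<bar>)"

lemma Qsub_bound: "\<bar>Qsub N c b\<bar> \<le> real N * \<bar>real_of_int (snd c)\<bar> + \<bar>real_of_int (fst c * snd c)\<bar>
      + \<bar>real_of_int (snd c * (int N - fst c))\<bar>"
  by (auto simp: Qsub_def mt_rate_def abs_mult)

lemma Mb_nonneg: "0 \<le> Mb N"
  unfolding Mb_def by (intro sum_nonneg) auto

lemma Qpow_bound: "\<bar>Qpow N k a b\<bar> \<le> Mb N ^ k"
proof (induction k arbitrary: b)
  case 0 show ?case by simp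
next
  case (Suc k)
  have "\<bar>Qpow N (Suc k) a b\<bar> \<le> (\<Sum>c\<in>Sstar N. \<bar>Qpow N k a c * Qsub N c b\<bar>)"
    by (simp add: sum_abs)
  also have "\<dots> \<le> (\<Sum>c\<in>Sstar N. Mb N ^ k * (real N * \<bar>real_of_int (snd c)\<bar> + \<bar>real_of_int (fst c * snd c)\<bar>
      + \<bar>real_of_int (snd c * (int N - fst c))\<bar>))"
    unfolding abs_mult by (intro sum_mono mult_mono Suc.IH Qsub_bound) (auto simp: Mb_nonneg)
  also have "\<dots> = Mb N ^ k * Mb N" unfolding Mb_def by (rule sum_distrib_left[symmetric])
  also have "\<dots> = Mb N ^ Suc k" by simp
  finally show ?case .
qed

lemma Qpow_summable: "summable (\<lambda>k. Qpow N k a b / fact k * y ^ k)"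
proof (rule summable_comparison_test[OF _ summable_exp[of "Mb N * \<bar>y\<bar>"]])
  show "\<exists>n0. \<forall>n\<ge>n0. norm (Qpow N n a b / fact n * y ^ n) \<le> inverse (fact n) * (Mb N * \<bar>y\<bar>) ^ n"
  proof (intro exI allI impI)
    fix n :: nat
    have "norm (Qpow N n a b / fact n * y ^ n) = \<bar>Qpow N n a b\<bar> * \<bar>y\<bar> ^ n * inverse (fact n)"
      by (simp add: abs_mult power_abs divide_inverse)
    also have "\<dots> \<le> Mb N ^ n * \<bar>y\<bar> ^ n * inverse (fact n)"
      by (intro mult_right_mono Qpow_bound) auto
    finally show "norm (Qpow N n a b / fact n * y ^ n) \<le> inverse (fact n) * (Mb N * \<bar>y\<bar>) ^ n"
      by (simp add: power_mult_distrib mult_ac)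
  qed
qed

lemma Ptrans_series: "Ptrans N t a b = (\<Sum>k. Qpow N k a b / fact k * t ^ k)"
  unfolding Ptrans_def by (rule arg_cong[where f=suminf]) (auto simp: fun_eq_iff)

lemma Ptrans_0: "Ptrans N 0 a b = (if a = b then 1 else 0)"
  unfolding Ptrans_series using powser_zero[of "\<lambda>k. Qpow N k a b / fact k"] by simp

lemma Ptrans_deriv: "((\<lambda>t. Ptrans N t a b) has_real_derivative (\<Sum>c\<in>Sstar N. Ptrans N t a c * Qsub N c b)) (at t)"
proof -
  have d: "((\<lambda>t. \<Sum>k. Qpow N k a b / fact k * t ^ k) has_real_derivative
     (\<Sum>k. diffs (\<lambda>k. Qpow N k a b / fact k) k * t ^ k)) (at t)"
    by (rule termdiffs_strong_converges_everywhere) (rule Qpow_summable)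
  have "(\<Sum>k. diffs (\<lambda>k. Qpow N k a b / fact k) k * t ^ k) = (\<Sum>k. \<Sum>c\<in>Sstar N. Qpow N k a c / fact k * t ^ k * Qsub N c b)"
  proof (rule arg_cong[where f=suminf], rule ext)
    fix k
    have "diffs (\<lambda>k. Qpow N k a b / fact k) k = Qpow N (Suc k) a b / fact k"
    proof -
      have "fact (Suc k) = (real (Suc k) * fact k :: real)" by (rule fact_Suc)
      moreover have "(fact k :: real) \<noteq> 0" by simp
      ultimately show ?thesis unfolding diffs_def by (simp del: Qpow.simps of_nat_Suc fact_Suc)
    qed
    thus "diffs (\<lambda>k. Qpow N k a b / fact k) k * t ^ k = (\<Sum>c\<in>Sstar N. Qpow N k a c / fact k * t ^ k * Qsub N c b)"
      by (simp add: sum_distrib_left sum_distrib_right sum_divide_distrib mult_ac)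
  qed
  also have "\<dots> = (\<Sum>c\<in>Sstar N. \<Sum>k. Qpow N k a c / fact k * t ^ k * Qsub N c b)"
    by (rule suminf_sum) (intro summable_mult2 Qpow_summable)
  also have "\<dots> = (\<Sum>c\<in>Sstar N. Ptrans N t a c * Qsub N c b)"
    by (rule sum.cong[OF refl]) (simp only: Ptrans_series suminf_mult2[OF Qpow_summable])
  finally show ?thesis using d unfolding Ptrans_series[abs_def] by simp
qed

lemma exp_series_real: "(\<Sum>k. x ^ k / fact k) = exp (x::real)"
  using exp_converges[of x] by (simp add: sums_iff divide_inverse scaleR_conv_of_real mult.commute)

lemma Ptrans_eig:
  assumes eig: "\<And>b. b \<in> Sstar N \<Longrightarrow> (\<Sum>a\<in>Sstar N. \<nu> a * Qsub N a b) = \<theta> * \<nu> b"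
    and b: "b \<in> Sstar N"
  shows "(\<Sum>a\<in>Sstar N. \<nu> a * Ptrans N t a b) = exp (\<theta> * t) * \<nu> b"
proof -
  have qp: "(\<Sum>a\<in>Sstar N. \<nu> a * Qpow N k a b) = \<theta> ^ k * \<nu> b" if "b \<in> Sstar N" for k b
    using that
  proof (induction k arbitrary: b)
    case 0 thus ?case by (simp add: finite_Sstar if_distrib cong: if_cong)
  next
    case (Suc k)
    have "(\<Sum>a\<in>Sstar N. \<nu> a * Qpow N (Suc k) a b) = (\<Sum>c\<in>Sstar N. (\<Sum>a\<in>Sstar N. \<nu> a * Qpow N k a c) * Qsub N c b)"
      by (simp add: sum_distrib_left sum_distrib_right mult_ac) (rule sum.swap)
    also have "\<dots> = (\<Sum>c\<in>Sstar N. \<theta> ^ k * (\<nu> c * Qsub N c b))"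
      by (rule sum.cong) (auto simp: Suc.IH)
    also have "\<dots> = \<theta> ^ Suc k * \<nu> b" using eig[OF Suc.prems] by (simp add: sum_distrib_left[symmetric])
    finally show ?case .
  qed
  have "(\<Sum>a\<in>Sstar N. \<nu> a * Ptrans N t a b) = (\<Sum>a\<in>Sstar N. \<Sum>k. \<nu> a * (Qpow N k a b / fact k * t ^ k))"
    by (rule sum.cong[OF refl]) (simp only: Ptrans_series suminf_mult[OF Qpow_summable])
  also have "\<dots> = (\<Sum>k. \<Sum>a\<in>Sstar N. \<nu> a * (Qpow N k a b / fact k * t ^ k))"
    by (rule suminf_sum[symmetric]) (intro summable_mult Qpow_summable)
  also have "\<dots> = (\<Sum>k. \<nu> b * ((\<theta> * t) ^ k / fact k))"
  proof (rule arg_cong[where f=suminf], rule ext)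
    fix k
    have "(\<Sum>a\<in>Sstar N. \<nu> a * (Qpow N k a b / fact k * t ^ k)) = (\<Sum>a\<in>Sstar N. \<nu> a * Qpow N k a b) * (t ^ k / fact k)"
      by (subst sum_distrib_right) (rule sum.cong, auto)
    thus "(\<Sum>a\<in>Sstar N. \<nu> a * (Qpow N k a b / fact k * t ^ k)) = \<nu> b * ((\<theta> * t) ^ k / fact k)"
      using qp[OF b, of k] by (simp add: power_mult_distrib mult_ac)
  qed
  also have "\<dots> = \<nu> b * exp (\<theta> * t)"
  proof -
    have "summable (\<lambda>k. (\<theta> * t) ^ k / fact k)"
      using summable_exp[of "\<theta> * t"] by (simp add: divide_inverse mult.commute)
    thus ?thesis by (subst suminf_mult) (simp_all add: exp_series_real)
  qed
  finally show ?thesis by simp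
qed

lemma Qpow_col: "Qpow N k a (int N, 1) = (if a = (int N, 1) then (- real N) ^ k else 0)"
proof (induction k)
  case 0 thus ?case by simp
next
  case (Suc k)
  have m: "(int N, 1) \<in> Sstar N" by (simp add: Sstar_def)
  show ?case using sumQ[OF m, of "\<lambda>c. Qpow N k a c"] p_NS Suc by simp
qed

lemma Ptrans_col: "Ptrans N t a (int N, 1) = (if a = (int N, 1) then exp (- real N * t) else 0)"
proof -
  have e: "t ^ k * (- real N) ^ k = (- (real N * t)) ^ k" for k
    by (metis mult.commute mult_minus_left power_mult_distrib)
  have "Ptrans N t a (int N, 1) = (\<Sum>k. (if a = (int N, 1) then (- real N * t) ^ k / fact k else 0))"
    unfolding Ptrans_def Qpow_col by (rule arg_cong[where f=suminf]) (auto simp: fun_eq_iff e)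
  thus ?thesis by (auto simp: exp_series_real)
qed

lemma nu_eig:
  assumes N: "1 \<le> N" and b: "b \<in> Sstar N"
  shows "(\<Sum>a\<in>Sstar N. nu_unnorm N a * Qsub N a b) = - real N * nu_unnorm N b"
proof -
  have s: "(\<Sum>a\<in>Sstar N. nu_unnorm N a * Qsub N a b) = - (real N * real_of_int (snd b)) * nu_unnorm N b
     + nu_unnorm N (p1 b) * r1 b + nu_unnorm N (p2 b) * r2 N b"
    unfolding sumQ[OF b] using nu_notS[OF N] by auto
  show ?thesis
  proof (cases "b = (int N, 1)")
    case True
    thus ?thesis unfolding s using p_NS nu_notS[OF N] by simp
  next
    case False
    have h: "nu_unnorm N b * (real N * real_of_int (snd b) - real N) = nu_unnorm N (p1 b) * r1 b + nu_unnorm N (p2 b) * r2 N b"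
      by (rule nu_rec[OF N b False])
    show ?thesis unfolding s using h by (simp add: algebra_simps)
  qed
qed

lemma eig_unique:
  assumes N: "1 \<le> N" and eig: "\<And>b. b \<in> Sstar N \<Longrightarrow> (\<Sum>a\<in>Sstar N. \<mu> a * Qsub N a b) = - real N * \<mu> b"
  shows "b \<in> Sstar N \<Longrightarrow> \<mu> b = \<mu> (int N, 1) * nu_unnorm N b"
proof (rule pot_induct[where N=N and P="\<lambda>b. \<mu> b = \<mu> (int N, 1) * nu_unnorm N b"])
  fix b assume hb: "b \<in> Sstar N" and IH: "\<And>a. a \<in> Sstar N \<Longrightarrow> pot a > pot b \<Longrightarrow> \<mu> a = \<mu> (int N, 1) * nu_unnorm N a"
  show "\<mu> b = \<mu> (int N, 1) * nu_unnorm N b"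
  proof (cases "b = (int N, 1)")
    case True thus ?thesis by (simp add: nu_unnorm_def)
  next
    case False
    have y2: "2 \<le> snd b" using Sstar_y[OF hb False] by simp
    have pp: "(if a \<in> Sstar N then \<mu> a * r else 0) = \<mu> (int N, 1) * nu_unnorm N a * r" if "a = p1 b \<or> a = p2 b" for a r
    proof (cases "a \<in> Sstar N")
      case True
      have "pot a > pot b" using that pot_p[of b] by auto
      thus ?thesis using IH True by simp
    next
      case False thus ?thesis using nu_notS[OF N] by simp
    qed
    have A: "- real N * \<mu> b = - (real N * real_of_int (snd b)) * \<mu> b
      + (if p1 b \<in> Sstar N then \<mu> (p1 b) * r1 b else 0) + (if p2 b \<in> Sstar N then \<mu> (p2 b) * r2 N b else 0)"
      using eig[OF hb] unfolding sumQ[OF hb] by simp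
    have B: "(if p1 b \<in> Sstar N then \<mu> (p1 b) * r1 b else 0) = \<mu> (int N, 1) * nu_unnorm N (p1 b) * r1 b" by (rule pp) simp
    have C: "(if p2 b \<in> Sstar N then \<mu> (p2 b) * r2 N b else 0) = \<mu> (int N, 1) * nu_unnorm N (p2 b) * r2 N b" by (rule pp) simp
    have h: "nu_unnorm N b * (real N * real_of_int (snd b) - real N) = nu_unnorm N (p1 b) * r1 b + nu_unnorm N (p2 b) * r2 N b"
      by (rule nu_rec[OF N hb False])
    have "\<mu> b * (real N * real_of_int (snd b) - real N) = \<mu> (int N, 1) * (nu_unnorm N (p1 b) * r1 b + nu_unnorm N (p2 b) * r2 N b)"
      using A unfolding B C by (simp add: algebra_simps)
    hence "\<mu> b * (real N * real_of_int (snd b) - real N) = \<mu> (int N, 1) * nu_unnorm N b * (real N * real_of_int (snd b) - real N)"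
      unfolding h[symmetric] by (simp add: mult.assoc)
    moreover have "real N * real_of_int (snd b) - real N \<noteq> 0"
    proof -
      have "real N * real_of_int (snd b) - real N = real N * (real_of_int (snd b) - 1)" by (simp add: algebra_simps)
      moreover have "real_of_int (snd b) - 1 > 0" using y2 by simp
      ultimately show ?thesis using N by simp
    qed
    ultimately show ?thesis by simp
  qed
qed assumption

lemma exp_at_top_lin: "c > 0 \<Longrightarrow> filterlim (\<lambda>t::real. exp (c * t)) at_top at_top"
  by (rule filterlim_compose[OF exp_at_top filterlim_tendsto_pos_mult_at_top[OF tendsto_const _ filterlim_ident]])

lemma U_lim:
  assumes N: "1 \<le> N"
  shows "b \<in> Sstar N \<Longrightarrow> ((\<lambda>t. exp (real N * t) * Ptrans N t (int N, 1) b) \<longlongrightarrow> nu_unnorm N b) at_top"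
proof (rule pot_induct[where N=N and P="\<lambda>b. ((\<lambda>t. exp (real N * t) * Ptrans N t (int N, 1) b) \<longlongrightarrow> nu_unnorm N b) at_top"])
  fix b assume hb: "b \<in> Sstar N" and IH: "\<And>a. a \<in> Sstar N \<Longrightarrow> pot a > pot b \<Longrightarrow>
     ((\<lambda>t. exp (real N * t) * Ptrans N t (int N, 1) a) \<longlongrightarrow> nu_unnorm N a) at_top"
  define U where "U a t = exp (real N * t) * Ptrans N t (int N, 1) a" for a t
  show "(U b \<longlongrightarrow> nu_unnorm N b) at_top"
  proof (cases "b = (int N, 1)")
    case True
    have "U b t = 1" for t unfolding U_def True Ptrans_col by (simp add: exp_add[symmetric])
    hence "U b = (\<lambda>_. 1)" by (simp add: fun_eq_iff)
    thus ?thesis using True by (simp add: nu_unnorm_def)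
  next
    case False
    define y where "y = real_of_int (snd b)"
    have y2: "2 \<le> y" using Sstar_y[OF hb False] by (simp add: y_def)
    define k where "k = real N * (y - 1)"
    have k: "k > 0" using N y2 by (simp add: k_def)
    define F where "F t = exp (real N * y * t) * Ptrans N t (int N, 1) b" for t
    define G where "G t = exp (k * t)" for t
    define R where "R t = (if p1 b \<in> Sstar N then Ptrans N t (int N, 1) (p1 b) * r1 b else 0)
        + (if p2 b \<in> Sstar N then Ptrans N t (int N, 1) (p2 b) * r2 N b else 0)" for t
    have dF: "(F has_real_derivative exp (real N * y * t) * R t) (at t)" for t
    proof -
      have "(F has_real_derivative exp (real N * y * t) * (real N * y) * Ptrans N t (int N, 1) b
          + exp (real N * y * t) * (\<Sum>c\<in>Sstar N. Ptrans N t (int N, 1) c * Qsub N c b)) (at t)"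
        unfolding F_def[abs_def] by (auto intro!: derivative_eq_intros Ptrans_deriv)
      moreover have "exp (real N * y * t) * (real N * y) * Ptrans N t (int N, 1) b
          + exp (real N * y * t) * (\<Sum>c\<in>Sstar N. Ptrans N t (int N, 1) c * Qsub N c b) = exp (real N * y * t) * R t"
        unfolding sumQ[OF hb] R_def y_def by (simp add: algebra_simps)
      ultimately show ?thesis by simp
    qed
    have dG: "(G has_real_derivative k * exp (k * t)) (at t)" for t
      unfolding G_def[abs_def] by (auto intro!: derivative_eq_intros)
    have ratio: "exp (real N * y * t) * R t / (k * exp (k * t)) =
       ((if p1 b \<in> Sstar N then U (p1 b) t * r1 b else 0) + (if p2 b \<in> Sstar N then U (p2 b) t * r2 N b else 0)) / k" for t
    proof -
      have "exp (real N * y * t) = exp (real N * t) * exp (k * t)"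
        unfolding exp_add[symmetric] k_def by (simp add: algebra_simps)
      hence "exp (real N * y * t) * R t / (k * exp (k * t)) = exp (real N * t) * R t / k"
        using k by simp
      also have "\<dots> = ((if p1 b \<in> Sstar N then U (p1 b) t * r1 b else 0) + (if p2 b \<in> Sstar N then U (p2 b) t * r2 N b else 0)) / k"
        by (simp add: R_def U_def algebra_simps)
      finally show ?thesis .
    qed
    have lim_term: "((\<lambda>t. if a \<in> Sstar N then U a t * r else 0) \<longlongrightarrow> nu_unnorm N a * r) at_top"
      if "a = p1 b \<or> a = p2 b" for a r
    proof (cases "a \<in> Sstar N")
      case True
      have "pot a > pot b" using that pot_p[of b] by auto
      hence "(U a \<longlongrightarrow> nu_unnorm N a) at_top" using IH True unfolding U_def[abs_def] by blast
      thus ?thesis using True by (simp add: tendsto_mult_right)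
    next
      case False thus ?thesis using nu_notS[OF N] by simp
    qed
    have "((\<lambda>t. exp (real N * y * t) * R t / (k * exp (k * t))) \<longlongrightarrow>
        (nu_unnorm N (p1 b) * r1 b + nu_unnorm N (p2 b) * r2 N b) / k) at_top"
      unfolding ratio by (intro tendsto_divide tendsto_add lim_term tendsto_const) (use k in auto)
    also have "(nu_unnorm N (p1 b) * r1 b + nu_unnorm N (p2 b) * r2 N b) / k = nu_unnorm N b"
    proof -
      have "k = real N * real_of_int (snd b) - real N" by (simp add: k_def y_def algebra_simps)
      hence kD: "k = real N * real_of_int (snd b) - real N" .
      have D0: "real N * real_of_int (snd b) - real N \<noteq> 0" using k kD by linarith
      show ?thesis unfolding nu_rec[OF N hb False, symmetric] kD using D0 by (rule nonzero_mult_div_cancel_right)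
    qed
    finally have lim': "((\<lambda>t. exp (real N * y * t) * R t / (k * exp (k * t))) \<longlongrightarrow> nu_unnorm N b) at_top" .
    have "((\<lambda>t. F t / G t) \<longlongrightarrow> nu_unnorm N b) at_top"
    proof (rule lhospital_at_top_at_top[where f' = "\<lambda>t. exp (real N * y * t) * R t" and g' = "\<lambda>t. k * exp (k * t)"])
      show "filterlim G at_top at_top" unfolding G_def by (rule exp_at_top_lin[OF k])
      show "\<forall>\<^sub>F x in at_top. k * exp (k * x) \<noteq> 0" using k by simp
      show "\<forall>\<^sub>F x in at_top. (F has_real_derivative exp (real N * y * x) * R x) (at x)" using dF by simp
      show "\<forall>\<^sub>F x in at_top. (G has_real_derivative k * exp (k * x)) (at x)" using dG by simp
    qed (rule lim')
    moreover have "F t / G t = U b t" for t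
    proof -
      have "exp (real N * y * t) = exp (real N * t) * exp (k * t)"
        unfolding exp_add[symmetric] k_def by (simp add: algebra_simps)
      thus ?thesis by (simp add: F_def G_def U_def)
    qed
    ultimately show ?thesis by simp
  qed
qed assumption

lemma deriv_right_unique:
  fixes f g :: "real \<Rightarrow> real"
  assumes df: "(f has_real_derivative D1) (at 0)" and dg: "(g has_real_derivative D2) (at 0)"
    and eq: "\<And>t. t \<ge> 0 \<Longrightarrow> f t = g t"
  shows "D1 = D2"
proof -
  have l1: "((\<lambda>y. (f y - f 0) / (y - 0)) \<longlongrightarrow> D1) (at_right 0)"
    using df unfolding has_field_derivative_iff by (rule tendsto_mono[OF at_le[OF subset_UNIV]])
  have l2: "((\<lambda>y. (g y - g 0) / (y - 0)) \<longlongrightarrow> D2) (at_right 0)"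
    using dg unfolding has_field_derivative_iff by (rule tendsto_mono[OF at_le[OF subset_UNIV]])
  have "\<forall>\<^sub>F y in at_right 0. (g y - g 0) / (y - 0) = (f y - f 0) / (y - 0)"
    using eventually_at_right_less[of "0::real"] by eventually_elim (simp add: eq)
  hence "((\<lambda>y. (f y - f 0) / (y - 0)) \<longlongrightarrow> D2) (at_right 0)" by (rule Lim_transform_eventually[OF l2])
  thus ?thesis using l1 tendsto_unique[OF trivial_limit_at_right_real] by blast
qed

lemma C_pos: "1 \<le> N \<Longrightarrow> C_N N \<ge> 1"
proof -
  assume N: "1 \<le> N"
  have m: "(int N, 1) \<in> Sstar N" by (simp add: Sstar_def)
  have "nu_unnorm N (int N, 1) \<le> C_N N" unfolding C_N_def
    by (rule member_le_sum[OF m]) (auto intro: nu_nonneg[OF N] simp: finite_Sstar)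
  thus ?thesis by (simp add: nu_unnorm_def)
qed

theorem mainTheorem4:
  fixes N :: nat
  assumes "1 \<le> N"
  shows "is_QSD N (nu_star N) \<and> nu_star N (int N, 1) > 0
    \<and> (\<forall>\<mu>. is_QSD N \<mu> \<and> \<mu> (int N, 1) > 0 \<longrightarrow> (\<forall>v\<in>Sstar N. \<mu> v = nu_star N v))
    \<and> (\<forall>v\<in>Sstar N.
         ((\<lambda>t. Ptrans N t (int N, 1) v / (\<Sum>b\<in>Sstar N. Ptrans N t (int N, 1) b))
            \<longlongrightarrow> nu_star N v) at_top)"
proof -
  note N = assms
  have C1: "C_N N \<ge> 1" by (rule C_pos[OF N])
  hence C0: "C_N N \<noteq> 0" by simp
  have m: "(int N, 1) \<in> Sstar N" by (simp add: Sstar_def)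
  have prob: "is_prob_on (Sstar N) (nu_star N)"
    unfolding is_prob_on_def nu_star_def
    using nu_nonneg[OF N] C1 by (auto simp: sum_divide_distrib[symmetric] C_N_def[symmetric])
  have eigs: "(\<Sum>a\<in>Sstar N. nu_star N a * Qsub N a b) = - real N * nu_star N b" if "b \<in> Sstar N" for b
  proof -
    have "(\<Sum>a\<in>Sstar N. nu_star N a * Qsub N a b) = (\<Sum>a\<in>Sstar N. nu_unnorm N a * Qsub N a b) / C_N N"
      by (simp add: nu_star_def sum_divide_distrib)
    thus ?thesis using nu_eig[OF N that] by (simp add: nu_star_def)
  qed
  have pe: "(\<Sum>a\<in>Sstar N. nu_star N a * Ptrans N t a b) = exp (- real N * t) * nu_star N b" if "b \<in> Sstar N" for t b
    by (rule Ptrans_eig[OF eigs that])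
  have qsd: "is_QSD N (nu_star N)"
    unfolding is_QSD_def
  proof (intro conjI prob allI impI)
    fix t :: real and A assume A: "A \<subseteq> Sstar N"
    have "(\<Sum>b\<in>A. \<Sum>a\<in>Sstar N. nu_star N a * Ptrans N t a b) = exp (- real N * t) * (\<Sum>b\<in>A. nu_star N b)"
      using A pe by (simp add: sum_distrib_left subset_eq)
    moreover have "(\<Sum>b\<in>Sstar N. \<Sum>a\<in>Sstar N. nu_star N a * Ptrans N t a b) = exp (- real N * t)"
      using pe prob by (simp add: sum_distrib_left[symmetric] is_prob_on_def)
    ultimately show "(\<Sum>b\<in>A. \<Sum>a\<in>Sstar N. nu_star N a * Ptrans N t a b) /
         (\<Sum>b\<in>Sstar N. \<Sum>a\<in>Sstar N. nu_star N a * Ptrans N t a b) = (\<Sum>b\<in>A. nu_star N b)" by simp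
  qed
  have pos: "nu_star N (int N, 1) > 0" using C1 by (simp add: nu_star_def nu_unnorm_def)
  have uniq: "\<forall>v\<in>Sstar N. \<mu> v = nu_star N v" if q: "is_QSD N \<mu>" and pos0: "\<mu> (int N, 1) > 0" for \<mu>
  proof -
    define D where "D t = (\<Sum>b\<in>Sstar N. \<Sum>a\<in>Sstar N. \<mu> a * Ptrans N t a b)" for t
    have pr: "is_prob_on (Sstar N) \<mu>" using q by (simp add: is_QSD_def)
    have qq: "(\<Sum>b\<in>A. \<Sum>a\<in>Sstar N. \<mu> a * Ptrans N t a b) / D t = (\<Sum>b\<in>A. \<mu> b)"
      if "t \<ge> 0" "A \<subseteq> Sstar N" for t A using q that by (simp add: is_QSD_def D_def)
    have D0: "D t \<noteq> 0" if "t \<ge> 0" for t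
      using qq[OF that order_refl] pr by (auto simp: is_prob_on_def D_def)
    have single: "(\<Sum>a\<in>Sstar N. \<mu> a * Ptrans N t a b) = \<mu> b * D t" if "t \<ge> 0" "b \<in> Sstar N" for t b
      using qq[OF that(1), of "{b}"] that D0[OF that(1)] by (simp add: field_simps)
    have col: "(\<Sum>a\<in>Sstar N. \<mu> a * Ptrans N t a (int N, 1)) = \<mu> (int N, 1) * exp (- real N * t)" for t
      unfolding Ptrans_col using m by (simp add: if_distrib finite_Sstar cong: if_cong)
    have Dexp: "D t = exp (- real N * t)" if "t \<ge> 0" "\<mu> (int N, 1) > 0" for t
      using single[OF that(1) m] col[of t] that(2) by simp
    have eigmu: "(\<Sum>a\<in>Sstar N. \<mu> a * Qsub N a b) = - real N * \<mu> b" if hb: "b \<in> Sstar N" and pos: "\<mu> (int N, 1) > 0" for b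
    proof -
      have d1: "((\<lambda>t. \<Sum>a\<in>Sstar N. \<mu> a * Ptrans N t a b) has_real_derivative
          (\<Sum>a\<in>Sstar N. \<mu> a * (\<Sum>c\<in>Sstar N. Ptrans N 0 a c * Qsub N c b))) (at 0)"
        by (intro DERIV_sum DERIV_cmult Ptrans_deriv)
      have e1: "(\<Sum>a\<in>Sstar N. \<mu> a * (\<Sum>c\<in>Sstar N. Ptrans N 0 a c * Qsub N c b)) = (\<Sum>a\<in>Sstar N. \<mu> a * Qsub N a b)"
      proof (rule sum.cong[OF refl])
        fix a assume a: "a \<in> Sstar N"
        have "(\<Sum>c\<in>Sstar N. Ptrans N 0 a c * Qsub N c b) = (\<Sum>c\<in>Sstar N. if a = c then Qsub N c b else 0)"
          by (rule sum.cong[OF refl]) (simp add: Ptrans_0)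
        also have "\<dots> = Qsub N a b" using a by (simp add: finite_Sstar)
        finally show "\<mu> a * (\<Sum>c\<in>Sstar N. Ptrans N 0 a c * Qsub N c b) = \<mu> a * Qsub N a b" by simp
      qed
      have d2: "((\<lambda>t. \<mu> b * exp (- real N * t)) has_real_derivative - real N * \<mu> b) (at 0)"
        by (auto intro!: derivative_eq_intros)
      have eq: "(\<Sum>a\<in>Sstar N. \<mu> a * Ptrans N t a b) = \<mu> b * exp (- real N * t)" if "0 \<le> t" for t
        using single[OF that hb] Dexp[OF that pos] by simp
      show ?thesis using deriv_right_unique[OF d1 d2 eq] e1 by simp
    qed
    show ?thesis
    proof
      fix v assume hv: "v \<in> Sstar N"
      have pos: "\<mu> (int N, 1) > 0" using pos0 .
      have mu_eq: "\<mu> b = \<mu> (int N, 1) * nu_unnorm N b" if "b \<in> Sstar N" for b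
        by (rule eig_unique[OF N eigmu[OF _ pos] that])
      have "1 = (\<Sum>b\<in>Sstar N. \<mu> b)" using pr by (simp add: is_prob_on_def)
      also have "\<dots> = \<mu> (int N, 1) * C_N N" unfolding C_N_def sum_distrib_left
        by (rule sum.cong[OF refl]) (rule mu_eq)
      finally have "\<mu> (int N, 1) = 1 / C_N N" using C0 by (simp add: field_simps)
      thus "\<mu> v = nu_star N v" using mu_eq[OF hv] by (simp add: nu_star_def)
    qed
  qed
  have lim: "((\<lambda>t. Ptrans N t (int N, 1) v / (\<Sum>b\<in>Sstar N. Ptrans N t (int N, 1) b)) \<longlongrightarrow> nu_star N v) at_top"
    if hv: "v \<in> Sstar N" for v
  proof -
    define U where "U a t = exp (real N * t) * Ptrans N t (int N, 1) a" for a t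
    have "((\<lambda>t. U v t / (\<Sum>b\<in>Sstar N. U b t)) \<longlongrightarrow> nu_unnorm N v / C_N N) at_top"
      unfolding C_N_def U_def
      by (intro tendsto_divide tendsto_sum U_lim[OF N] hv) (use C0 in \<open>simp_all add: C_N_def\<close>)
    moreover have "U v t / (\<Sum>b\<in>Sstar N. U b t) = Ptrans N t (int N, 1) v / (\<Sum>b\<in>Sstar N. Ptrans N t (int N, 1) b)" for t
      unfolding U_def sum_distrib_left[symmetric] by simp
    ultimately show ?thesis by (simp add: nu_star_def)
  qed
  show ?thesis using qsd pos uniq lim by blast
qed

end
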